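(* Let $\hat\varrho$ be a normalized proximate order of order $\rho>0$. There exists a constant $k$ depending only on $\rho$ such that for every $\sigma>0$ there is a constant $C(\sigma)$ with $$\frac{1}{\ell!}\|\partial_{x_0}^\ell f\|_{\hat\varrho,k\sigma}\le C(\sigma)\|f\|_{\hat\varrho,\sigma}\frac{(2k\sigma)^{\ell/\rho}}{G_{\hat\varrho,\ell}}$$ for all $f\in A_{\hat\varrho,\sigma}$ and all $\ell\in\mathbb{N}_0$.
   Context: $\mathbb{R}_n$ is the real Clifford algebra generated by $e_1,\dots,e_n$ with $e_ie_j=-e_je_i$ ($i\ne j$), $e_i^2=-1$, with Euclidean norm $|a|^2=\sum_Aa_A^2$. Paravectors $x=x_0+\sum x_\ell e_\ell$ are identified with $\mathbb{R}^{n+1}$; $\mathbb{S}=\{\sum x_\ell e_\ell:\sum x_\ell^2=1\}$. $\mathcal{SM}_L(\mathbb{R}^{n+1})$ is the set of entire left slice monogenic functions: $f(u+jv)=f_0(u,v)+jf_1(u,v)$ for all $u,v\in\mathbb{R}$, $j\in\mathbb{S}$, with $f_0,f_1$ continuously differentiable, $f_0$ even and $f_1$ odd in $v$, $\partial_uf_0=\partial_vf_1$, $\partial_vf_0=-\partial_uf_1$. $\partial_{x_0}$ is the partial derivative in $x_0$. A proximate order is a differentiable $\varrho:[0,\infty)\to[0,\infty)$ with $\lim_{r\to\infty}\varrho(r)=\rho>0$ and $\lim_{r\to\infty}\varrho'(r)r\ln r=0$; normalized means $r\mapsto r^{\varrho(r)}$ is strictly increasing on $(0,\infty)$ and tends to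 $0$ as $r\to0^+$; $\varphi$ is the inverse of $r\mapsto r^{\varrho(r)}$, $G_{\varrho,0}=1$, $G_{\varrho,\ell}=\varphi(\ell)^\ell/(e\rho)^{\ell/\rho}$. $A_{\varrho,\sigma}=\{f\in\mathcal{SM}_L(\mathbb{R}^{n+1}):\|f\|_{\varrho,\sigma}:=\sup_x|f(x)|e^{-\sigma|x|^{\varrho(|x|)}}<\infty\}$. *)

theory Defs
  imports "HOL-Analysis.Analysis"
begin

text \<open>The real Clifford algebra R_n with generators e_i indexed by a finite linearly
ordered type 'n (n = CARD('n)). An element is a real vector indexed by the subsets
A of 'n (coefficient a_A of the basis blade e_A); the norm of real^('n set) is the
Euclidean norm |a|^2 = sum of a_A^2.\<close>

type_synonym 'n clif = "real ^ ('n set)"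

text \<open>Sign of e_A e_B = sign * e_(A sym-diff B), using e_i e_j = - e_j e_i and e_i^2 = -1.\<close>
definition cl_sign :: "('n::{finite,linorder}) set \<Rightarrow> 'n set \<Rightarrow> real" where
  "cl_sign A B = (-1) ^ card {(a, b). a \<in> A \<and> b \<in> B \<and> b < a} * (-1) ^ card (A \<inter> B)"

definition cl_mult :: "('n::{finite,linorder}) clif \<Rightarrow> 'n clif \<Rightarrow> 'n clif" (infixl "\<odot>" 70) where
  "x \<odot> y = (\<chi> C. \<Sum>A\<in>UNIV. \<Sum>B\<in>UNIV.
      if (A - B) \<union> (B - A) = C then cl_sign A B * (x $ A) * (y $ B) else 0)"

definition cl_one :: "('n::{finite,linorder}) clif" where
  "cl_one = axis {} 1"

text \<open>Paravectors x_0 + sum x_l e_l (identified with R^(n+1)).\<close>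
definition paravectors :: "('n::{finite,linorder}) clif set" where
  "paravectors = {x. \<forall>A. card A \<ge> 2 \<longrightarrow> x $ A = 0}"

definition cl_sphere :: "('n::{finite,linorder}) clif set" where
  "cl_sphere = {x. x \<in> paravectors \<and> x $ {} = 0 \<and> norm x = 1}"

definition slice_monogenic :: "(('n::{finite,linorder}) clif \<Rightarrow> 'n clif) \<Rightarrow> bool" where
  "slice_monogenic f \<longleftrightarrow>
    (\<exists>(f0 :: real \<times> real \<Rightarrow> 'n clif) (f1 :: real \<times> real \<Rightarrow> 'n clif)
       (D0 :: real \<times> real \<Rightarrow> (real \<times> real) \<Rightarrow>\<^sub>L 'n clif) (D1 :: real \<times> real \<Rightarrow> (real \<times> real) \<Rightarrow>\<^sub>L 'n clif).
      (\<forall>z. (f0 has_derivative blinfun_apply (D0 z)) (at z)) \<and> continuous_on UNIV D0 \<and>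
      (\<forall>z. (f1 has_derivative blinfun_apply (D1 z)) (at z)) \<and> continuous_on UNIV D1 \<and>
      (\<forall>u v. f0 (u, - v) = f0 (u, v)) \<and>
      (\<forall>u v. f1 (u, - v) = - f1 (u, v)) \<and>
      (\<forall>z. D0 z (1, 0) = D1 z (0, 1)) \<and>
      (\<forall>z. D0 z (0, 1) = - D1 z (1, 0)) \<and>
      (\<forall>u v. \<forall>j \<in> cl_sphere. f (u *\<^sub>R cl_one + v *\<^sub>R j) = f0 (u, v) + j \<odot> f1 (u, v)))"

definition pd0 :: "(('n::{finite,linorder}) clif \<Rightarrow> 'n clif) \<Rightarrow> 'n clif \<Rightarrow> 'n clif" where
  "pd0 f x = vector_derivative (\<lambda>t. f (x + t *\<^sub>R cl_one)) (at 0)"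

definition proximate_order :: "(real \<Rightarrow> real) \<Rightarrow> real \<Rightarrow> bool" where
  "proximate_order \<rho>' \<rho> \<longleftrightarrow> \<rho> > 0 \<and>
     (\<forall>r \<ge> 0. \<rho>' r \<ge> 0) \<and>
     (\<forall>r \<ge> 0. \<rho>' differentiable (at r within {0..})) \<and>
     (\<rho>' \<longlongrightarrow> \<rho>) at_top \<and>
     ((\<lambda>r. deriv \<rho>' r * r * ln r) \<longlongrightarrow> 0) at_top"

definition normalized_proximate_order :: "(real \<Rightarrow> real) \<Rightarrow> real \<Rightarrow> bool" where
  "normalized_proximate_order \<rho>' \<rho> \<longleftrightarrow> proximate_order \<rho>' \<rho> \<and>
     strict_mono_on {0<..} (\<lambda>r. r powr \<rho>' r) \<and>
     ((\<lambda>r. r powr \<rho>' r) \<longlongrightarrow> 0) (at_right 0)"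

definition po_inv :: "(real \<Rightarrow> real) \<Rightarrow> real \<Rightarrow> real" where
  "po_inv \<rho>' s = (THE r. r > 0 \<and> r powr \<rho>' r = s)"

definition G_po :: "(real \<Rightarrow> real) \<Rightarrow> real \<Rightarrow> nat \<Rightarrow> real" where
  "G_po \<rho>' \<rho> l = (if l = 0 then 1
      else po_inv \<rho>' (real l) ^ l / (exp 1 * \<rho>) powr (real l / \<rho>))"

definition po_norm :: "(real \<Rightarrow> real) \<Rightarrow> real \<Rightarrow> (('n::{finite,linorder}) clif \<Rightarrow> 'n clif) \<Rightarrow> ereal" where
  "po_norm \<rho>' \<sigma> f = (SUP x \<in> paravectors. ereal (norm (f x) * exp (- \<sigma> * norm x powr \<rho>' (norm x))))"

definition A_space :: "(real \<Rightarrow> real) \<Rightarrow> real \<Rightarrow> (('n::{finite,linorder}) clif \<Rightarrow> 'n clif) set" where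
  "A_space \<rho>' \<sigma> = {f. slice_monogenic f \<and> po_norm \<rho>' \<sigma> f < \<infinity>}"

end

theory Submission
  imports Defs "HOL-Complex_Analysis.Complex_Analysis"
begin


lemma cl_mult_nth: "(x \<odot> y) $ C = (\<Sum>A\<in>UNIV. \<Sum>B\<in>UNIV.
      if (A - B) \<union> (B - A) = C then cl_sign A B * (x $ A) * (y $ B) else 0)"
  by (simp add: cl_mult_def)

lemma cl_mult_nth': "(x \<odot> y) $ C = (\<Sum>A\<in>UNIV. \<Sum>B\<in>UNIV.
      (x $ A) * (y $ B) * (if (A - B) \<union> (B - A) = C then cl_sign A B else 0))"
  unfolding cl_mult_nth by (intro sum.cong refl) auto

lemma cl_mult_bilinear: "bilinear ((\<odot>) :: ('n::{finite,linorder}) clif \<Rightarrow> 'n clif \<Rightarrow> 'n clif)"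
  unfolding bilinear_def
proof safe
  fix y :: "'n clif"
  show "linear (\<lambda>x. x \<odot> y)"
    by (rule linearI) (simp_all add: vec_eq_iff cl_mult_nth' ring_distribs sum.distrib sum_distrib_left mult.assoc)
next
  fix x :: "'n clif"
  show "linear (\<lambda>y. x \<odot> y)"
    by (rule linearI) (simp_all add: vec_eq_iff cl_mult_nth' ring_distribs sum.distrib sum_distrib_left mult.assoc
      mult.left_commute)
qed

lemma cl_mult_bounded_bilinear: "bounded_bilinear ((\<odot>) :: ('n::{finite,linorder}) clif \<Rightarrow> 'n clif \<Rightarrow> 'n clif)"
  using cl_mult_bilinear bilinear_conv_bounded_bilinear by blast

lemma axis_nth_if: "axis k (x::real) $ j = (if j = k then x else 0)"
  by (simp add: axis_def)


lemma cl_mult_gen_nth: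
  fixes y :: "('n::{finite,linorder}) clif"
  shows "(axis {i} 1 \<odot> y) $ C = cl_sign {i} (({i} - C) \<union> (C - {i})) * y $ (({i} - C) \<union> (C - {i}))"
proof -
  have "(axis {i} 1 \<odot> y) $ C = (\<Sum>B\<in>UNIV. if ({i} - B) \<union> (B - {i}) = C then cl_sign {i} B * y $ B else 0)"
  proof -
    have "\<And>A. (\<Sum>B\<in>UNIV. if (A - B) \<union> (B - A) = C then cl_sign A B * (axis {i} 1 $ A) * (y $ B) else 0)
      = (if A = {i} then (\<Sum>B\<in>UNIV. if ({i} - B) \<union> (B - {i}) = C then cl_sign {i} B * y $ B else 0) else 0)"
      by (cases "A = {i}") (simp_all add: axis_nth_if cong del: if_weak_cong)
    then show ?thesis by (simp add: cl_mult_nth)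
  qed
  also have "\<dots> = (\<Sum>B\<in>{({i} - C) \<union> (C - {i})}. cl_sign {i} B * y $ B)"
    apply (rule sum.mono_neutral_cong_right) apply auto
    done
  finally show ?thesis by simp
qed

lemma abs_cl_sign: "\<bar>cl_sign A B\<bar> = 1"
  unfolding cl_sign_def abs_mult power_abs by simp

lemma cl_sign_sq: "(cl_sign A B)\<^sup>2 = 1"
  by (metis abs_cl_sign power2_abs one_power2)

lemma norm_cl_gen_mult:
  fixes y :: "('n::{finite,linorder}) clif"
  shows "norm (axis {i} 1 \<odot> y) = norm y"
proof -
  define \<tau> where "\<tau> = (\<lambda>C::'n set. ({i} - C) \<union> (C - {i}))"
  have inv: "\<tau> (\<tau> C) = C" for C by (auto simp: \<tau>_def)
  have bij: "bij \<tau>" by (rule o_bij[of \<tau>]) (auto simp: inv fun_eq_iff)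
  have "(\<Sum>C\<in>UNIV. (norm ((axis {i} 1 \<odot> y) $ C))\<^sup>2) = (\<Sum>C\<in>UNIV. (norm (y $ \<tau> C))\<^sup>2)"
    by (intro sum.cong refl) (simp only: real_norm_def power2_abs cl_mult_gen_nth \<tau>_def power_mult_distrib cl_sign_sq mult_1)
  also have "\<dots> = (\<Sum>C\<in>UNIV. (norm (y $ C))\<^sup>2)"
    using sum.reindex_bij_betw[of \<tau> UNIV UNIV "\<lambda>C. (norm (y $ C))\<^sup>2"] bij by blast
  finally show ?thesis by (simp add: norm_vec_def L2_set_def)
qed



context
  fixes p :: "real \<Rightarrow> real" and \<rho> :: real
  assumes npo: "normalized_proximate_order p \<rho>"
begin

lemma rho_pos: "\<rho> > 0" using npo by (simp add: normalized_proximate_order_def proximate_order_def)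

lemma p_lim: "(p \<longlongrightarrow> \<rho>) at_top" using npo by (simp add: normalized_proximate_order_def proximate_order_def)

lemma p_dlim: "((\<lambda>r. deriv p r * r * ln r) \<longlongrightarrow> 0) at_top"
  using npo by (simp add: normalized_proximate_order_def proximate_order_def)

lemma V_smono: "strict_mono_on {0<..} (\<lambda>r. r powr p r)"
  using npo by (simp add: normalized_proximate_order_def)

lemma V_lim0: "((\<lambda>r. r powr p r) \<longlongrightarrow> 0) (at_right 0)"
  using npo by (simp add: normalized_proximate_order_def)

lemma p_differentiable: "r > 0 \<Longrightarrow> p differentiable (at r)"
proof -
  assume r: "r > 0"
  have "p differentiable (at r within {0..})"
    using npo r by (simp add: normalized_proximate_order_def proximate_order_def)
  moreover have "at r within {0..} = at r"
    by (rule at_within_interior) (use r in auto)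
  ultimately show ?thesis by simp
qed

lemma p_isCont: "r > 0 \<Longrightarrow> isCont p r"
  using p_differentiable differentiable_imp_continuous_within by blast

lemma p_cont_on: "continuous_on {0<..} p"
  by (rule continuous_at_imp_continuous_on) (auto intro: p_isCont)

lemma V_cont_on: "continuous_on {0<..} (\<lambda>r. r powr p r)"
  by (intro continuous_intros p_cont_on) auto

lemma V_nonneg: "r powr p r \<ge> 0" by simp

lemma V_pos: "r > 0 \<Longrightarrow> r powr p r > 0" by simp

lemma V_mono: assumes "0 \<le> r" "r \<le> s" shows "r powr p r \<le> s powr p s"
proof (cases "r = 0")
  case True then show ?thesis by simp
next
  case False
  then show ?thesis using assms strict_mono_on_leD[OF V_smono, of r s] by auto
qed

lemma p_diff_bound:
  assumes lam: "q > 0" and e: "e > 0"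
  shows "\<exists>T. \<forall>t\<ge>T. \<bar>(p (q * t) - p t) * ln t\<bar> \<le> e"
proof (cases "q = 1")
  case True then show ?thesis using e by auto
next
  case False
  define m where "m = min 1 q"
  have m: "m > 0" "m \<le> 1" "m \<le> q" using lam by (auto simp: m_def)
  have lm: "\<bar>q - 1\<bar> > 0" using False by simp
  define \<epsilon> where "\<epsilon> = e * m / (2 * \<bar>q - 1\<bar>)"
  have \<epsilon>: "\<epsilon> > 0" using e m lm by (simp add: \<epsilon>_def)
  from p_dlim have "eventually (\<lambda>r. \<bar>deriv p r * r * ln r\<bar> < \<epsilon>) at_top"
    using \<epsilon> by (auto simp: tendsto_iff dist_real_def)
  then obtain T0 where T0: "\<And>r. r \<ge> T0 \<Longrightarrow> \<bar>deriv p r * r * ln r\<bar> < \<epsilon>"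
    by (auto simp: eventually_at_top_linorder)
  define T where "T = max (T0 / m) (max (1 / m^2) (2 / m))"
  show ?thesis
  proof (intro exI allI impI)
    fix t assume tT: "T \<le> t"
    have mtT0: "m * t \<ge> T0" using tT m by (auto simp: T_def field_simps)
    have mt2: "m * t \<ge> 2" using tT m by (auto simp: T_def field_simps)
    have "2 / m \<ge> 2" using m by (simp add: field_simps)
    hence t2: "t \<ge> 2" using tT by (auto simp: T_def)
    have tm2: "t * m^2 \<ge> 1" using tT m by (auto simp: T_def field_simps)
    define a where "a = min t (q * t)"
    define b where "b = max t (q * t)"
    have a_eq: "a = m * t" using t2 lam by (auto simp: a_def m_def min_def)
    have ab: "a < b" using False t2 lam by (auto simp: a_def b_def min_def max_def)
    have a0: "a > 0" using a_eq m t2 by simp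
    have ba: "b - a = \<bar>q - 1\<bar> * t" using t2 lam
      by (auto simp: a_def b_def min_def max_def abs_if algebra_simps)
    have pd: "\<bar>p (q * t) - p t\<bar> = \<bar>p b - p a\<bar>"
      by (auto simp: a_def b_def min_def max_def)
    have "continuous_on {a..b} p"
      using p_cont_on by (rule continuous_on_subset) (use a0 in auto)
    from MVT[OF ab this] p_differentiable a0
    obtain l z where z: "a < z" "z < b" "DERIV p z :> l" "p b - p a = (b - a) * l" by force
    have lz: "l = deriv p z" using z(3) by (simp add: DERIV_imp_deriv)
    have z1: "z > 1" "z \<ge> T0" using z a_eq mtT0 mt2 by auto
    have lnz: "ln z \<ge> ln (m * t)" using z a_eq a0 by simp
    have lnmt: "ln (m * t) > 0" using mt2 by simp
    have "\<bar>l\<bar> * (z * ln z) < \<epsilon>" using T0[OF z1(2)] z1 lz by (simp add: abs_mult)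
    moreover have "z * ln z \<ge> (m * t) * ln (m * t)"
      using mult_mono[of "m*t" z "ln (m*t)" "ln z"] z a_eq lnz lnmt a0 by auto
    ultimately have l_bd: "\<bar>l\<bar> * ((m * t) * ln (m * t)) \<le> \<epsilon>"
      by (smt (verit) abs_ge_zero mult_left_mono)
    have lnt: "ln t \<le> 2 * ln (m * t)"
    proof -
      have "ln (t * m^2) \<ge> 0" using tm2 by simp
      hence "ln t + 2 * ln m \<ge> 0" using m t2 by (simp add: ln_mult ln_realpow)
      thus ?thesis using m t2 by (simp add: ln_mult)
    qed
    have lnt0: "ln t \<ge> 0" using t2 by simp
    have "\<bar>(p (q * t) - p t) * ln t\<bar> = \<bar>q - 1\<bar> * t * \<bar>l\<bar> * ln t"
      using pd z(4) ba lnt0 t2 by (simp add: abs_mult)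
    also have "\<dots> \<le> \<bar>q - 1\<bar> * t * \<bar>l\<bar> * (2 * ln (m * t))"
      using lnt t2 by (intro mult_left_mono) auto
    also have "\<dots> = (2 * \<bar>q - 1\<bar> / m) * (\<bar>l\<bar> * ((m * t) * ln (m * t)))"
      using m by (simp add: field_simps)
    also have "\<dots> \<le> (2 * \<bar>q - 1\<bar> / m) * \<epsilon>"
      using l_bd m by (intro mult_left_mono) auto
    also have "\<dots> = e" using m lm by (simp add: \<epsilon>_def field_simps)
    finally show "\<bar>(p (q * t) - p t) * ln t\<bar> \<le> e" .
  qed
qed

lemma p_diff_lim:
  assumes lam: "q > 0"
  shows "((\<lambda>t. (p (q * t) - p t) * ln t) \<longlongrightarrow> 0) at_top"
proof (rule tendstoI)
  fix e :: real assume e: "e > 0"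
  hence "e/2 > 0" by simp
  then obtain T where T: "\<forall>t\<ge>T. \<bar>(p (q * t) - p t) * ln t\<bar> \<le> e / 2"
    using p_diff_bound[OF lam] by blast
  show "eventually (\<lambda>t. dist ((p (q * t) - p t) * ln t) 0 < e) at_top"
    unfolding eventually_at_top_linorder
  proof (intro exI[of _ T] allI impI)
    fix t assume "t \<ge> T"
    then have "\<bar>(p (q * t) - p t) * ln t\<bar> \<le> e / 2" using T by blast
    thus "dist ((p (q * t) - p t) * ln t) 0 < e" using e by (simp add: dist_real_def)
  qed
qed

lemma V_ratio_lim:
  assumes lam: "q > 0"
  shows "((\<lambda>t. (q * t) powr p (q * t) / t powr p t) \<longlongrightarrow> q powr \<rho>) at_top"
proof -
  have lim1: "((\<lambda>t. p (q * t)) \<longlongrightarrow> \<rho>) at_top"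
    using filterlim_compose[OF p_lim filterlim_tendsto_pos_mult_at_top[OF tendsto_const lam filterlim_ident]] .
  have "((\<lambda>t. exp (p (q * t) * ln q + (p (q * t) - p t) * ln t)) \<longlongrightarrow> exp (\<rho> * ln q + 0)) at_top"
    by (intro tendsto_intros lim1 p_diff_lim lam)
  moreover have "eventually (\<lambda>t. exp (p (q * t) * ln q + (p (q * t) - p t) * ln t)
      = (q * t) powr p (q * t) / t powr p t) at_top"
    using eventually_gt_at_top[of 0]
  proof eventually_elim
    case (elim t)
    then show ?case using lam
      by (simp add: powr_def ln_mult exp_diff[symmetric] algebra_simps)
  qed
  ultimately show ?thesis using lam by (simp add: powr_def Lim_transform_eventually)
qed

lemma V_ratio_upper:
  assumes lam: "q > 0"
  shows "\<exists>T>0. \<forall>t\<ge>T. (q * t) powr p (q * t) \<le> (q powr \<rho> + 1) * t powr p t"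
proof -
  have "eventually (\<lambda>t. (q * t) powr p (q * t) / t powr p t < q powr \<rho> + 1) at_top"
    using V_ratio_lim[OF lam] by (rule order_tendstoD) simp
  moreover have "eventually (\<lambda>t::real. t > 0) at_top" by (rule eventually_gt_at_top)
  ultimately have "eventually (\<lambda>t. t > 0 \<and> (q * t) powr p (q * t) / t powr p t < q powr \<rho> + 1) at_top"
    by eventually_elim auto
  then obtain T where T: "\<And>t. t \<ge> T \<Longrightarrow> t > 0 \<and> (q * t) powr p (q * t) / t powr p t < q powr \<rho> + 1"
    by (auto simp: eventually_at_top_linorder)
  show ?thesis
  proof (intro exI[of _ "max T 1"] conjI allI impI)
    fix t assume "max T 1 \<le> t"
    then have "t > 0" "(q * t) powr p (q * t) / t powr p t < q powr \<rho> + 1" using T by auto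
    then show "(q * t) powr p (q * t) \<le> (q powr \<rho> + 1) * t powr p t"
      by (simp add: divide_less_eq)
  qed simp
qed

lemma V_ratio_lower:
  assumes lam: "q > 0"
  shows "\<exists>T>0. \<forall>t\<ge>T. (q * t) powr p (q * t) \<ge> (q powr \<rho> / 2) * t powr p t"
proof -
  have "eventually (\<lambda>t. (q * t) powr p (q * t) / t powr p t > q powr \<rho> / 2) at_top"
    using V_ratio_lim[OF lam] by (rule order_tendstoD) (use lam in simp)
  moreover have "eventually (\<lambda>t::real. t > 0) at_top" by (rule eventually_gt_at_top)
  ultimately have "eventually (\<lambda>t. t > 0 \<and> (q * t) powr p (q * t) / t powr p t > q powr \<rho> / 2) at_top"
    by eventually_elim auto
  then obtain T where T: "\<And>t. t \<ge> T \<Longrightarrow> t > 0 \<and> (q * t) powr p (q * t) / t powr p t > q powr \<rho> / 2"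
    by (auto simp: eventually_at_top_linorder)
  show ?thesis
  proof (intro exI[of _ "max T 1"] conjI allI impI)
    fix t assume "max T 1 \<le> t"
    then have "t > 0" "(q * t) powr p (q * t) / t powr p t > q powr \<rho> / 2" using T by auto
    then show "(q * t) powr p (q * t) \<ge> (q powr \<rho> / 2) * t powr p t"
      by (simp add: less_divide_eq)
  qed simp
qed

lemma V_sum_bound:
  "\<exists>c'. \<forall>r R. r \<ge> 0 \<longrightarrow> R \<ge> 0 \<longrightarrow>
     (r + R) powr p (r + R) \<le> (2 powr \<rho> + 1) * (r powr p r + R powr p R) + c'"
proof -
  obtain T where T: "T > 0" "\<And>t. t \<ge> T \<Longrightarrow> (2 * t) powr p (2 * t) \<le> (2 powr \<rho> + 1) * t powr p t"
    using V_ratio_upper[of 2] by auto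
  have V2: "(2 * t) powr p (2 * t) \<le> (2 powr \<rho> + 1) * t powr p t + (2 * T) powr p (2 * T)" if "t \<ge> 0" for t
  proof (cases "t \<ge> T")
    case True then show ?thesis using T(2)[OF True] V_nonneg[of "2*T"] by linarith
  next
    case False
    then have "(2 * t) powr p (2 * t) \<le> (2 * T) powr p (2 * T)" using that by (intro V_mono) auto
    moreover have "(2 powr \<rho> + 1) * t powr p t \<ge> 0" by (intro mult_nonneg_nonneg) auto
    ultimately show ?thesis by linarith
  qed
  show ?thesis
  proof (intro exI[of _ "(2 * T) powr p (2 * T)"] allI impI)
    fix r R :: real assume rR: "r \<ge> 0" "R \<ge> 0"
    define mx where "mx = max r R"
    have "(r + R) powr p (r + R) \<le> (2 * mx) powr p (2 * mx)" using rR by (intro V_mono) (auto simp: mx_def)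
    also have "\<dots> \<le> (2 powr \<rho> + 1) * mx powr p mx + (2 * T) powr p (2 * T)" using V2 rR by (simp add: mx_def)
    also have "mx powr p mx \<le> r powr p r + R powr p R"
      by (auto simp: mx_def max_def add_increasing add_increasing2)
    hence "(2 powr \<rho> + 1) * mx powr p mx \<le> (2 powr \<rho> + 1) * (r powr p r + R powr p R)"
      by (intro mult_left_mono) auto
    finally show "(r + R) powr p (r + R) \<le> (2 powr \<rho> + 1) * (r powr p r + R powr p R) + (2 * T) powr p (2 * T)"
      by simp
  qed
qed

lemma V_to_infty: "\<exists>b>0. b powr p b > s"
proof -
  have "eventually (\<lambda>t. p t > \<rho> / 2) at_top"
  proof -
    have "\<rho>/2 < \<rho>" using rho_pos by simp
    from order_tendstoD(1)[OF p_lim this] show ?thesis .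
  qed
  then obtain T where T: "\<And>t. t \<ge> T \<Longrightarrow> p t > \<rho> / 2" by (auto simp: eventually_at_top_linorder)
  define t where "t = max (max T 1) ((\<bar>s\<bar>+1) powr (2/\<rho>))"
  have t1: "t \<ge> 1" "t \<ge> T" by (auto simp: t_def)
  have "\<bar>s\<bar> + 1 = ((\<bar>s\<bar>+1) powr (2/\<rho>)) powr (\<rho>/2)" using rho_pos by (simp add: powr_powr)
  also have "\<dots> \<le> t powr (\<rho>/2)" using rho_pos by (intro powr_mono2) (auto simp: t_def)
  also have "\<dots> \<le> t powr p t" using t1 T[of t] by (intro powr_mono) auto
  finally show ?thesis using t1 by (intro exI[of _ t]) auto
qed

lemma V_small: assumes "s > 0" shows "\<exists>a>0. a powr p a < s"
proof -
  have "eventually (\<lambda>t. t powr p t < s) (at_right 0)"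
    using V_lim0 assms by (rule order_tendstoD)
  moreover have "eventually (\<lambda>t. t > 0) (at_right (0::real))" by (rule eventually_at_right_less)
  ultimately have "eventually (\<lambda>t. t > 0 \<and> t powr p t < s) (at_right (0::real))"
    by eventually_elim auto
  then obtain b where b: "b > 0" "\<And>y. y > 0 \<Longrightarrow> y < b \<Longrightarrow> y > 0 \<and> y powr p y < s"
    unfolding eventually_at_right_field by auto
  then show ?thesis using b(2)[of "b/2"] by (intro exI[of _ "b/2"]) auto
qed

lemma po_inv_prop:
  assumes s: "s > 0"
  shows "po_inv p s > 0 \<and> po_inv p s powr p (po_inv p s) = s"
proof -
  obtain a where a: "a > 0" "a powr p a < s" using V_small[OF s] by blast
  obtain b where b: "b > 0" "b powr p b > s" using V_to_infty by blast
  have ab: "a \<le> b"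
  proof (rule ccontr)
    assume "\<not> a \<le> b"
    then have "b powr p b \<le> a powr p a" using b by (intro V_mono) auto
    then show False using a b s by linarith
  qed
  have "continuous_on {a..b} (\<lambda>r. r powr p r)"
    using V_cont_on by (rule continuous_on_subset) (use a in auto)
  then obtain r where r: "a \<le> r" "r \<le> b" "r powr p r = s"
    using IVT'[of "\<lambda>r. r powr p r" a s b] a b ab by auto
  have "r > 0" using r a by auto
  have uniq: "r' = r" if "r' > 0" "r' powr p r' = s" for r'
    using strict_mono_on_eq[OF V_smono, of r' r] that \<open>r > 0\<close> r by auto
  have "po_inv p s = r"
    unfolding po_inv_def
  proof (rule the_equality)
    show "r > 0 \<and> r powr p r = s" using \<open>r > 0\<close> r by simp
  next
    fix r' assume "r' > 0 \<and> r' powr p r' = s" thus "r' = r" using uniq by blast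
  qed
  then show ?thesis using \<open>r > 0\<close> r by simp
qed

lemma po_inv_le:
  assumes s: "s > 0" and r: "r > 0" and le: "s \<le> r powr p r"
  shows "po_inv p s \<le> r"
proof (rule ccontr)
  assume "\<not> po_inv p s \<le> r"
  then have "r powr p r < po_inv p s powr p (po_inv p s)"
    using strict_mono_onD[OF V_smono, of r "po_inv p s"] r po_inv_prop[OF s] by auto
  then show False using po_inv_prop[OF s] le by simp
qed

lemma G_pos: "G_po p \<rho> l > 0"
  using po_inv_prop[of "real l"] rho_pos by (auto simp: G_po_def)

lemma main_real_bound:
  assumes \<sigma>: "\<sigma> > 0"
  shows "\<exists>C0\<ge>0. \<exists>Rs::nat\<Rightarrow>real. (\<forall>l. Rs l > 0) \<and> (\<forall>l. \<forall>r\<ge>0.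
     exp (\<sigma> * (r + Rs l) powr p (r + Rs l)) * exp (- ((2 powr \<rho> + 1) * \<sigma>) * r powr p r) / Rs l ^ l
       \<le> C0 * (2 * (2 powr \<rho> + 1) * \<sigma>) powr (real l / \<rho>) / G_po p \<rho> l)"
proof -
  define k where "k = 2 powr \<rho> + 1"
  have k: "k > 0" by (simp add: k_def add_pos_nonneg)
  obtain c' where c': "\<And>r R. r \<ge> 0 \<Longrightarrow> R \<ge> 0 \<Longrightarrow>
     (r + R) powr p (r + R) \<le> k * (r powr p r + R powr p R) + c'"
    using V_sum_bound unfolding k_def by blast
  define s where "s = k * \<sigma>"
  have s: "s > 0" using k \<sigma> by (simp add: s_def)
  define a where "a = \<rho> * s"
  have a: "a > 0" using s rho_pos by (simp add: a_def)
  define lam where "lam = (2 * a) powr (1 / \<rho>)"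
  have lam: "lam > 0" using a by (simp add: lam_def)
  have lamrho: "lam powr \<rho> / 2 = a" using a rho_pos by (simp add: lam_def powr_powr)
  obtain T where T: "T > 0" "\<And>t. t \<ge> T \<Longrightarrow> (lam * t) powr p (lam * t) \<ge> a * t powr p t"
    using V_ratio_lower[OF lam] lamrho by auto
  define Rs where "Rs l = (if l = 0 then 1 else po_inv p (real l / a))" for l :: nat
  have Rs_pos: "Rs l > 0" for l using po_inv_prop[of "real l / a"] a by (auto simp: Rs_def)
  have VRs: "(Rs l) powr p (Rs l) = real l / a" if "l > 0" for l
    using po_inv_prop[of "real l / a"] a that by (auto simp: Rs_def)
  define E where "E l = exp (s * (Rs l) powr p (Rs l)) / Rs l ^ l" for l
  define B where "B l = (2 * s) powr (real l / \<rho>) / G_po p \<rho> l" for l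
  have B_pos: "B l > 0" for l using G_pos s by (simp add: B_def)
  define L0 where "L0 = nat \<lceil>a * T powr p T\<rceil> + 1"
  have large: "E l \<le> B l" if l: "l \<ge> L0" for l
  proof -
    have l0: "l > 0" using l by (simp add: L0_def)
    have R: "Rs l > 0" "Rs l powr p (Rs l) = real l / a" using Rs_pos VRs[OF l0] by auto
    have "real l > a * T powr p T" using l unfolding L0_def by linarith
    hence lT: "real l / a > T powr p T" using a by (simp add: field_simps)
    have RT: "Rs l \<ge> T"
    proof (rule ccontr)
      assume "\<not> T \<le> Rs l"
      hence "Rs l powr p (Rs l) \<le> T powr p T" using R by (intro V_mono) auto
      thus False using R lT by simp
    qed
    have "a * Rs l powr p (Rs l) \<le> (lam * Rs l) powr p (lam * Rs l)" using T(2)[OF RT] .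
    hence "real l \<le> (lam * Rs l) powr p (lam * Rs l)" using R a by simp
    hence phi: "po_inv p (real l) \<le> lam * Rs l" using l0 lam R by (intro po_inv_le) auto
    have phipos: "po_inv p (real l) > 0" using po_inv_prop[of "real l"] l0 by simp
    have "po_inv p (real l) ^ l \<le> (lam * Rs l) ^ l" using phi phipos by (intro power_mono) auto
    hence pw: "po_inv p (real l) ^ l \<le> lam ^ l * Rs l ^ l" by (simp add: power_mult_distrib)
    have "E l = exp (real l / \<rho>) / Rs l ^ l"
      using R a rho_pos s by (simp add: E_def a_def field_simps)
    also have "\<dots> \<le> exp (real l / \<rho>) * lam ^ l / po_inv p (real l) ^ l"
      using pw phipos R by (simp add: field_simps)
    also have "exp (real l / \<rho>) * lam ^ l = (2 * s) powr (real l / \<rho>) * (exp 1 * \<rho>) powr (real l / \<rho>)"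
    proof -
      have "lam ^ l = (2 * a) powr (real l / \<rho>)"
        using a by (simp add: lam_def powr_realpow[symmetric] powr_powr)
      moreover have "exp (real l / \<rho>) = exp 1 powr (real l / \<rho>)" by (simp add: powr_def)
      ultimately show ?thesis using s rho_pos
        by (simp add: a_def powr_mult[symmetric] mult_ac)
    qed
    also have "(2 * s) powr (real l / \<rho>) * (exp 1 * \<rho>) powr (real l / \<rho>) / po_inv p (real l) ^ l = B l"
      using l0 by (simp add: B_def G_po_def)
    finally show ?thesis .
  qed
  define C1 where "C1 = max 1 (Max ((\<lambda>l. E l / B l) ` {..<L0}))"
  have C1: "C1 \<ge> 1" by (simp add: C1_def)
  have EB: "E l \<le> C1 * B l" for l
  proof (cases "l < L0")
    case True
    have "E l / B l \<le> C1" unfolding C1_def using True by (intro max.coboundedI2 Max_ge) auto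
    thus ?thesis using B_pos[of l] by (simp add: divide_le_eq)
  next
    case False
    hence "E l \<le> B l" using large by simp
    also have "\<dots> \<le> C1 * B l" using C1 B_pos[of l] by simp
    finally show ?thesis .
  qed
  show ?thesis
  proof (intro exI[of _ "exp (\<sigma> * c') * C1"] exI[of _ Rs] conjI allI impI)
    show "exp (\<sigma> * c') * C1 \<ge> 0" using C1 by simp
    fix l :: nat show "Rs l > 0" by (rule Rs_pos)
  next
    fix l :: nat and r :: real assume r: "r \<ge> 0"
    have "\<sigma> * (r + Rs l) powr p (r + Rs l) \<le> \<sigma> * (k * (r powr p r + Rs l powr p (Rs l)) + c')"
      using c'[OF r, of "Rs l"] Rs_pos[of l] \<sigma> by (intro mult_left_mono) auto
    hence "exp (\<sigma> * (r + Rs l) powr p (r + Rs l)) * exp (- (k * \<sigma>) * r powr p r)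
        \<le> exp (\<sigma> * (k * (r powr p r + Rs l powr p (Rs l)) + c')) * exp (- (k * \<sigma>) * r powr p r)"
      by simp
    also have "\<dots> = exp (\<sigma> * c') * exp (s * Rs l powr p (Rs l))"
    proof -
      have "exp (\<sigma> * (k * (r powr p r + Rs l powr p (Rs l)) + c')) * exp (- (k * \<sigma>) * r powr p r)
          = exp (\<sigma> * (k * (r powr p r + Rs l powr p (Rs l)) + c') + (- (k * \<sigma>) * r powr p r))"
        by (rule exp_add[symmetric])
      also have "\<sigma> * (k * (r powr p r + Rs l powr p (Rs l)) + c') + (- (k * \<sigma>) * r powr p r)
          = \<sigma> * c' + s * Rs l powr p (Rs l)" by (simp add: s_def algebra_simps)
      finally show ?thesis by (simp add: exp_add)
    qed
    finally have "exp (\<sigma> * (r + Rs l) powr p (r + Rs l)) * exp (- (k * \<sigma>) * r powr p r) / Rs l ^ l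
        \<le> exp (\<sigma> * c') * E l"
      using Rs_pos[of l] by (simp add: E_def divide_right_mono)
    also have "\<dots> \<le> exp (\<sigma> * c') * (C1 * B l)" using EB by simp
    also have "\<dots> = exp (\<sigma> * c') * C1 * (2 * k * \<sigma>) powr (real l / \<rho>) / G_po p \<rho> l"
      by (simp add: B_def s_def mult_ac)
    finally show "exp (\<sigma> * (r + Rs l) powr p (r + Rs l)) * exp (- ((2 powr \<rho> + 1) * \<sigma>) * r powr p r) / Rs l ^ l
       \<le> exp (\<sigma> * c') * C1 * (2 * (2 powr \<rho> + 1) * \<sigma>) powr (real l / \<rho>) / G_po p \<rho> l"
      by (simp add: k_def)
  qed
qed

end



lemma vec_has_vector_derivative:
  fixes h :: "'i::finite \<Rightarrow> real \<Rightarrow> real"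
  assumes "\<And>i. (h i has_real_derivative d i) (at t0)"
  shows "((\<lambda>t. (\<chi> i. h i t) :: real^'i) has_vector_derivative (\<chi> i. d i)) (at t0)"
proof -
  have eq: "(\<chi> i. g i) = (\<Sum>i\<in>UNIV. g i *\<^sub>R (axis i 1 :: real^'i))" for g :: "'i \<Rightarrow> real"
    by (simp add: vec_eq_iff axis_def if_distrib sum.If_cases cong del: if_weak_cong)
  have "((\<lambda>t. \<Sum>i\<in>UNIV. h i t *\<^sub>R (axis i 1 :: real^'i)) has_vector_derivative
        (\<Sum>i\<in>UNIV. d i *\<^sub>R (axis i 1 :: real^'i))) (at t0)"
  proof (intro has_vector_derivative_sum)
    fix i
    show "((\<lambda>t. h i t *\<^sub>R (axis i 1 :: real^'i)) has_vector_derivative d i *\<^sub>R (axis i 1 :: real^'i)) (at t0)"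
      using has_vector_derivative_scaleR[OF assms[of i] has_vector_derivative_const[of "axis i 1 :: real^'i"]]
      by simp
  qed
  then show ?thesis by (simp only: eq[symmetric])
qed

lemma cl_one_nth: "(cl_one :: ('n::{finite,linorder}) clif) $ A = (if A = {} then 1 else 0)"
  by (simp add: cl_one_def axis_nth_if)

lemma sphere_nth0: "j \<in> cl_sphere \<Longrightarrow> j $ {} = 0" by (simp add: cl_sphere_def)
lemma sphere_norm: "j \<in> cl_sphere \<Longrightarrow> norm j = 1" by (simp add: cl_sphere_def)

lemma para_in:
  fixes j :: "('n::{finite,linorder}) clif"
  assumes "j \<in> cl_sphere"
  shows "u *\<^sub>R cl_one + v *\<^sub>R j \<in> paravectors"
  using assms by (auto simp: paravectors_def cl_sphere_def cl_one_nth)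

lemma para_norm:
  fixes j :: "('n::{finite,linorder}) clif"
  assumes j: "j \<in> cl_sphere"
  shows "norm (u *\<^sub>R cl_one + v *\<^sub>R j) = cmod (Complex u v)"
proof -
  have "orthogonal (u *\<^sub>R cl_one) (v *\<^sub>R j)"
    using sphere_nth0[OF j] by (simp add: orthogonal_def cl_one_def inner_axis')
  then have "(norm (u *\<^sub>R cl_one + v *\<^sub>R j))\<^sup>2 = (norm (u *\<^sub>R (cl_one::'n clif)))\<^sup>2 + (norm (v *\<^sub>R j))\<^sup>2"
    by (rule norm_add_Pythagorean)
  also have "\<dots> = u\<^sup>2 + v\<^sup>2" using sphere_norm[OF j] by (simp add: cl_one_def)
  finally show ?thesis by (simp add: cmod_def real_sqrt_unique)
qed

lemma gen_sphere: "(axis {i} 1 :: ('n::{finite,linorder}) clif) \<in> cl_sphere"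
  by (auto simp: cl_sphere_def paravectors_def axis_nth_if)

lemma para_decomp:
  fixes x :: "('n::{finite,linorder}) clif"
  assumes x: "x \<in> paravectors"
  shows "\<exists>u v j. j \<in> cl_sphere \<and> x = u *\<^sub>R cl_one + v *\<^sub>R j"
proof -
  define u where "u = x $ {}"
  define w where "w = x - u *\<^sub>R cl_one"
  have w0: "w $ {} = 0" by (simp add: w_def u_def cl_one_nth)
  have wp: "w \<in> paravectors" using x by (auto simp: paravectors_def w_def cl_one_nth)
  show ?thesis
  proof (cases "w = 0")
    case True
    then show ?thesis using gen_sphere[of undefined]
      by (intro exI[of _ u] exI[of _ 0] exI[of _ "axis {undefined} 1"]) (auto simp: w_def)
  next
    case False
    define j where "j = w /\<^sub>R norm w"
    have "j \<in> cl_sphere" using False w0 wp by (auto simp: cl_sphere_def j_def paravectors_def)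
    moreover have "x = u *\<^sub>R cl_one + norm w *\<^sub>R j" using False by (simp add: j_def w_def)
    ultimately show ?thesis by blast
  qed
qed

lemma blinfun_pair_decomp:
  fixes L :: "(real \<times> real) \<Rightarrow>\<^sub>L 'b::real_normed_vector"
  shows "L (a, b) = a *\<^sub>R L (1, 0) + b *\<^sub>R L (0, 1)"
proof -
  have "(a, b) = a *\<^sub>R (1::real, 0::real) + b *\<^sub>R (0, 1)" by simp
  then have "L (a, b) = L (a *\<^sub>R (1, 0) + b *\<^sub>R (0, 1))" by metis
  also have "\<dots> = a *\<^sub>R L (1, 0) + b *\<^sub>R L (0, 1)" by (simp only: blinfun.add_right blinfun.scaleR_right)
  finally show ?thesis .
qed

lemma holo_from_CR:
  fixes f0 f1 :: "real \<times> real \<Rightarrow> ('n::{finite,linorder}) clif"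
    and D0 D1 :: "real \<times> real \<Rightarrow> (real \<times> real) \<Rightarrow>\<^sub>L 'n clif"
  assumes d0: "\<forall>z. (f0 has_derivative blinfun_apply (D0 z)) (at z)"
    and d1: "\<forall>z. (f1 has_derivative blinfun_apply (D1 z)) (at z)"
    and cr1: "\<forall>z. D0 z (1, 0) = D1 z (0, 1)"
    and cr2: "\<forall>z. D0 z (0, 1) = - D1 z (1, 0)"
  shows "((\<lambda>w. Complex (f0 (Re w, Im w) $ A) (f1 (Re w, Im w) $ A)) has_field_derivative
           Complex (D0 (Re z, Im z) (1, 0) $ A) (D1 (Re z, Im z) (1, 0) $ A)) (at z)"
proof -
  define P where "P = (\<lambda>w::complex. (Re w, Im w))"
  have blP: "bounded_linear P" unfolding P_def
    by (intro bounded_linear_Pair bounded_linear_Re bounded_linear_Im)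
  have P: "(P has_derivative P) (at z)" using blP by (rule bounded_linear_imp_has_derivative)
  have h0: "((\<lambda>w. f0 (P w) $ A) has_derivative (\<lambda>h. D0 (P z) (P h) $ A)) (at z)"
    using bounded_linear.has_derivative[OF bounded_linear_vec_nth has_derivative_compose[OF P d0[rule_format, of "P z"]]]
    by simp
  have h1: "((\<lambda>w. f1 (P w) $ A) has_derivative (\<lambda>h. D1 (P z) (P h) $ A)) (at z)"
    using bounded_linear.has_derivative[OF bounded_linear_vec_nth has_derivative_compose[OF P d1[rule_format, of "P z"]]]
    by simp
  have "((\<lambda>w. complex_of_real (f0 (P w) $ A) + \<i> * complex_of_real (f1 (P w) $ A)) has_derivative
        (\<lambda>h. complex_of_real (D0 (P z) (P h) $ A) + \<i> * complex_of_real (D1 (P z) (P h) $ A))) (at z)"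
    by (intro has_derivative_add has_derivative_mult_right
          bounded_linear.has_derivative[OF bounded_linear_of_real] h0 h1)
  moreover have "(\<lambda>h. complex_of_real (D0 (P z) (P h) $ A) + \<i> * complex_of_real (D1 (P z) (P h) $ A))
      = (*) (Complex (D0 (P z) (1, 0) $ A) (D1 (P z) (1, 0) $ A))"
  proof
    fix h :: complex
    have e0: "D0 (P z) (P h) = Re h *\<^sub>R D0 (P z) (1, 0) - Im h *\<^sub>R D1 (P z) (1, 0)"
      using blinfun_pair_decomp[of "D0 (P z)" "Re h" "Im h"] cr2 by (simp add: P_def)
    have e1: "D1 (P z) (P h) = Re h *\<^sub>R D1 (P z) (1, 0) + Im h *\<^sub>R D0 (P z) (1, 0)"
      using blinfun_pair_decomp[of "D1 (P z)" "Re h" "Im h"] cr1 by (simp add: P_def)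
    show "complex_of_real (D0 (P z) (P h) $ A) + \<i> * complex_of_real (D1 (P z) (P h) $ A)
        = Complex (D0 (P z) (1, 0) $ A) (D1 (P z) (1, 0) $ A) * h"
      by (simp add: e0 e1 complex_eq_iff algebra_simps)
  qed
  ultimately show ?thesis
    by (simp add: has_field_derivative_def P_def Complex_eq)
qed

lemma re_im_shift_deriv:
  assumes hol: "h holomorphic_on UNIV"
  shows "((\<lambda>t. Re (h (Complex (u + t) v))) has_real_derivative Re (deriv h (Complex u v))) (at 0)"
    and "((\<lambda>t. Im (h (Complex (u + t) v))) has_real_derivative Im (deriv h (Complex u v))) (at 0)"
proof -
  define z where "z = Complex u v"
  have Dh: "(h has_field_derivative deriv h z) (at z)"
    using hol by (simp add: DERIV_deriv_iff_field_differentiable holomorphic_on_imp_differentiable_at)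
  have Df: "((\<lambda>t. z + of_real t) has_vector_derivative 1) (at 0)"
    by (auto intro!: derivative_eq_intros)
  have "((h \<circ> (\<lambda>t. z + of_real t)) has_vector_derivative 1 * deriv h z) (at 0)"
    by (rule field_vector_diff_chain_at[OF Df]) (use Dh in simp)
  moreover have "(h \<circ> (\<lambda>t. z + of_real t)) = (\<lambda>t. h (Complex (u + t) v))"
  proof
    fix t
    have "z + of_real t = Complex (u + t) v" by (simp add: z_def complex_eq_iff)
    then show "(h \<circ> (\<lambda>t. z + of_real t)) t = h (Complex (u + t) v)" by simp
  qed
  ultimately have D: "((\<lambda>t. h (Complex (u + t) v)) has_vector_derivative deriv h z) (at 0)" by simp
  show "((\<lambda>t. Re (h (Complex (u + t) v))) has_real_derivative Re (deriv h (Complex u v))) (at 0)"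
    using has_field_derivative_Re[OF D] by (simp add: z_def)
  show "((\<lambda>t. Im (h (Complex (u + t) v))) has_real_derivative Im (deriv h (Complex u v))) (at 0)"
    using has_field_derivative_Im[OF D] by (simp add: z_def)
qed

lemma pd0_step:
  fixes f :: "('n::{finite,linorder}) clif \<Rightarrow> 'n clif" and H :: "'n set \<Rightarrow> complex \<Rightarrow> complex"
  assumes hol: "\<forall>A. H A holomorphic_on UNIV"
    and rep: "\<forall>u v. \<forall>j\<in>cl_sphere. f (u *\<^sub>R cl_one + v *\<^sub>R j) =
        (\<chi> A. Re (H A (Complex u v))) + j \<odot> (\<chi> A. Im (H A (Complex u v)))"
  shows "\<forall>u v. \<forall>j\<in>cl_sphere. pd0 f (u *\<^sub>R cl_one + v *\<^sub>R j) =
        (\<chi> A. Re (deriv (H A) (Complex u v))) + j \<odot> (\<chi> A. Im (deriv (H A) (Complex u v)))"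
proof (intro allI ballI)
  fix u v :: real and j :: "'n clif" assume j: "j \<in> cl_sphere"
  have eq: "(\<lambda>t. f (u *\<^sub>R cl_one + v *\<^sub>R j + t *\<^sub>R cl_one)) =
     (\<lambda>t. (\<chi> A. Re (H A (Complex (u + t) v))) + j \<odot> (\<chi> A. Im (H A (Complex (u + t) v))))"
  proof
    fix t
    have "u *\<^sub>R cl_one + v *\<^sub>R j + t *\<^sub>R cl_one = (u + t) *\<^sub>R cl_one + v *\<^sub>R j"
      by (simp add: algebra_simps)
    then have "f (u *\<^sub>R cl_one + v *\<^sub>R j + t *\<^sub>R cl_one) = f ((u + t) *\<^sub>R cl_one + v *\<^sub>R j)"
      by (simp only:)
    also have "\<dots> = (\<chi> A. Re (H A (Complex (u + t) v))) + j \<odot> (\<chi> A. Im (H A (Complex (u + t) v)))"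
      using rep j by blast
    finally show "f (u *\<^sub>R cl_one + v *\<^sub>R j + t *\<^sub>R cl_one) =
      (\<chi> A. Re (H A (Complex (u + t) v))) + j \<odot> (\<chi> A. Im (H A (Complex (u + t) v)))" .
  qed
  have d0: "((\<lambda>t. (\<chi> A. Re (H A (Complex (u + t) v))) :: 'n clif) has_vector_derivative
      (\<chi> A. Re (deriv (H A) (Complex u v)))) (at 0)"
    by (rule vec_has_vector_derivative) (rule re_im_shift_deriv(1)[OF hol[rule_format]])
  have d1: "((\<lambda>t. (\<chi> A. Im (H A (Complex (u + t) v))) :: 'n clif) has_vector_derivative
      (\<chi> A. Im (deriv (H A) (Complex u v)))) (at 0)"
    by (rule vec_has_vector_derivative) (rule re_im_shift_deriv(2)[OF hol[rule_format]])
  have bl: "bounded_linear (\<lambda>y. j \<odot> y)"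
    using bounded_bilinear.bounded_linear_right[OF cl_mult_bounded_bilinear] .
  have "((\<lambda>t. (\<chi> A. Re (H A (Complex (u + t) v))) + j \<odot> (\<chi> A. Im (H A (Complex (u + t) v))))
     has_vector_derivative
      (\<chi> A. Re (deriv (H A) (Complex u v))) + j \<odot> (\<chi> A. Im (deriv (H A) (Complex u v)))) (at 0)"
    by (intro has_vector_derivative_add d0 bounded_linear.has_vector_derivative[OF bl d1])
  then show "pd0 f (u *\<^sub>R cl_one + v *\<^sub>R j) =
        (\<chi> A. Re (deriv (H A) (Complex u v))) + j \<odot> (\<chi> A. Im (deriv (H A) (Complex u v)))"
    unfolding pd0_def eq by (rule vector_derivative_at)
qed

lemma slice_iter:
  fixes f :: "('n::{finite,linorder}) clif \<Rightarrow> 'n clif"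
  assumes sm: "slice_monogenic f"
  shows "\<exists>H :: 'n set \<Rightarrow> complex \<Rightarrow> complex. (\<forall>A. H A holomorphic_on UNIV) \<and>
    (\<forall>l u v. \<forall>j\<in>cl_sphere. (pd0 ^^ l) f (u *\<^sub>R cl_one + v *\<^sub>R j) =
        (\<chi> A. Re ((deriv ^^ l) (H A) (Complex u v))) + j \<odot> (\<chi> A. Im ((deriv ^^ l) (H A) (Complex u v)))) \<and>
    (\<forall>u v A. cmod (H A (Complex u v)) \<le> norm (f (u *\<^sub>R cl_one + v *\<^sub>R axis {i} 1)) + norm (f (u *\<^sub>R cl_one + (- v) *\<^sub>R axis {i} 1)))"
proof -
  obtain f0 f1 :: "real \<times> real \<Rightarrow> 'n clif" and D0 D1 :: "real \<times> real \<Rightarrow> (real \<times> real) \<Rightarrow>\<^sub>L 'n clif"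
    where d0: "\<forall>z. (f0 has_derivative blinfun_apply (D0 z)) (at z)"
      and d1: "\<forall>z. (f1 has_derivative blinfun_apply (D1 z)) (at z)"
      and ev: "\<forall>u v. f0 (u, - v) = f0 (u, v)"
      and od: "\<forall>u v. f1 (u, - v) = - f1 (u, v)"
      and cr1: "\<forall>z. D0 z (1, 0) = D1 z (0, 1)"
      and cr2: "\<forall>z. D0 z (0, 1) = - D1 z (1, 0)"
      and rep: "\<forall>u v. \<forall>j \<in> cl_sphere. f (u *\<^sub>R cl_one + v *\<^sub>R j) = f0 (u, v) + j \<odot> f1 (u, v)"
    using sm unfolding slice_monogenic_def by metis
  define H where "H A z = Complex (f0 (Re z, Im z) $ A) (f1 (Re z, Im z) $ A)" for A z
  have hol: "H A holomorphic_on UNIV" for A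
    unfolding holomorphic_on_open[OF open_UNIV] H_def
    using holo_from_CR[OF d0 d1 cr1 cr2] by blast
  have f0eq: "f0 (u, v) = (\<chi> A. Re (H A (Complex u v)))" for u v by (simp add: H_def vec_eq_iff)
  have f1eq: "f1 (u, v) = (\<chi> A. Im (H A (Complex u v)))" for u v by (simp add: H_def vec_eq_iff)
  have it: "\<forall>u v. \<forall>j\<in>cl_sphere. (pd0 ^^ l) f (u *\<^sub>R cl_one + v *\<^sub>R j) =
        (\<chi> A. Re ((deriv ^^ l) (H A) (Complex u v))) + j \<odot> (\<chi> A. Im ((deriv ^^ l) (H A) (Complex u v)))" for l
  proof (induction l)
    case 0
    then show ?case using rep f0eq f1eq by simp
  next
    case (Suc l)
    have "\<forall>A. (deriv ^^ l) (H A) holomorphic_on UNIV"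
      using hol by (intro allI holomorphic_higher_deriv) auto
    from pd0_step[OF this Suc.IH] show ?case by simp
  qed
  have bd: "cmod (H A (Complex u v)) \<le> norm (f (u *\<^sub>R cl_one + v *\<^sub>R axis {i} 1)) + norm (f (u *\<^sub>R cl_one + (- v) *\<^sub>R axis {i} 1))"
    for u v A
  proof -
    define e :: "'n clif" where "e = axis {i} 1"
    have e: "e \<in> cl_sphere" by (simp add: e_def gen_sphere)
    have w1: "f (u *\<^sub>R cl_one + v *\<^sub>R e) = f0 (u, v) + e \<odot> f1 (u, v)" using rep e by blast
    have "f (u *\<^sub>R cl_one + (- v) *\<^sub>R e) = f0 (u, - v) + e \<odot> f1 (u, - v)" using rep e by blast
    also have "\<dots> = f0 (u, v) - e \<odot> f1 (u, v)"
      using ev od bounded_bilinear.minus_right[OF cl_mult_bounded_bilinear] by simp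
    finally have w2: "f (u *\<^sub>R cl_one + (- v) *\<^sub>R e) = f0 (u, v) - e \<odot> f1 (u, v)" .
    define a where "a = f (u *\<^sub>R cl_one + v *\<^sub>R e)"
    define b where "b = f (u *\<^sub>R cl_one + (- v) *\<^sub>R e)"
    have "f0 (u, v) = (1/2) *\<^sub>R (a + b)" using w1 w2 by (simp add: a_def b_def algebra_simps)
    hence n0: "norm (f0 (u, v)) \<le> (norm a + norm b) / 2"
      by (simp add: norm_triangle_ineq)
    have "a - b = 2 *\<^sub>R (e \<odot> f1 (u, v))" using w1 w2 by (simp add: a_def b_def scaleR_2)
    hence "e \<odot> f1 (u, v) = (1/2) *\<^sub>R (a - b)" by simp
    hence "norm (e \<odot> f1 (u, v)) \<le> (norm a + norm b) / 2"
      by (simp add: norm_triangle_ineq4)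
    hence n1: "norm (f1 (u, v)) \<le> (norm a + norm b) / 2"
      by (simp add: e_def norm_cl_gen_mult)
    have "cmod (H A (Complex u v)) \<le> \<bar>f0 (u, v) $ A\<bar> + \<bar>f1 (u, v) $ A\<bar>"
      using cmod_le[of "H A (Complex u v)"] by (simp add: H_def)
    also have "\<dots> \<le> norm (f0 (u, v)) + norm (f1 (u, v))"
      by (intro add_mono component_le_norm_cart)
    also have "\<dots> \<le> norm a + norm b" using n0 n1 by simp
    finally show ?thesis by (simp add: a_def b_def e_def)
  qed
  show ?thesis using hol it bd by blast
qed




theorem lemma3p11:
  fixes \<rho> :: real
  assumes "\<rho> > 0"
  shows "\<exists>k > 0. \<forall>\<rho>'. normalized_proximate_order \<rho>' \<rho> \<longrightarrow>
     (\<forall>\<sigma> > 0. \<exists>C. \<forall>(f :: ('n::{finite,linorder}) clif \<Rightarrow> 'n clif) \<in> A_space \<rho>' \<sigma>. \<forall>l :: nat.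
        ereal (1 / fact l) * po_norm \<rho>' (k * \<sigma>) ((pd0 ^^ l) f)
          \<le> ereal (C * (2 * k * \<sigma>) powr (real l / \<rho>) / G_po \<rho>' \<rho> l) * po_norm \<rho>' \<sigma> f)"
proof -
  define k where "k = 2 powr \<rho> + 1"
  have k: "k > 0" by (simp add: k_def add_pos_nonneg)
  obtain K where K: "K > 0" "\<And>a b :: 'n clif. norm (a \<odot> b) \<le> norm a * norm b * K"
    using bounded_bilinear.pos_bounded[OF cl_mult_bounded_bilinear] by blast
  define N where "N = (1 + K) * real (card (UNIV :: 'n set set)) * 2"
  have N: "N \<ge> 0" using K by (simp add: N_def)
  show ?thesis
  proof (rule exI[of _ k], intro conjI k allI impI)
    fix p assume npo: "normalized_proximate_order p \<rho>"
    fix \<sigma> :: real assume \<sigma>: "\<sigma> > 0"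
    obtain C0 Rs where C0: "C0 \<ge> 0" and Rs: "\<And>l. Rs l > 0" and bnd: "\<And>l r. r \<ge> 0 \<Longrightarrow>
       exp (\<sigma> * (r + Rs l) powr p (r + Rs l)) * exp (- (k * \<sigma>) * r powr p r) / Rs l ^ l
       \<le> C0 * (2 * k * \<sigma>) powr (real l / \<rho>) / G_po p \<rho> l"
      using main_real_bound[OF npo \<sigma>] unfolding k_def by blast
    show "\<exists>C. \<forall>f :: 'n clif \<Rightarrow> 'n clif \<in> A_space p \<sigma>. \<forall>l :: nat.
        ereal (1 / fact l) * po_norm p (k * \<sigma>) ((pd0 ^^ l) f)
          \<le> ereal (C * (2 * k * \<sigma>) powr (real l / \<rho>) / G_po p \<rho> l) * po_norm p \<sigma> f"
    proof (intro exI[of _ "N * C0"] ballI allI)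
      fix f :: "'n clif \<Rightarrow> 'n clif" and l :: nat
      assume fA: "f \<in> A_space p \<sigma>"
      have sm: "slice_monogenic f" and fin: "po_norm p \<sigma> f < \<infinity>" using fA by (auto simp: A_space_def)
      have le_po: "ereal (norm (f y) * exp (- \<sigma> * norm y powr p (norm y))) \<le> po_norm p \<sigma> f"
        if "y \<in> paravectors" for y
        unfolding po_norm_def using that by (rule SUP_upper)
      have "0 \<in> (paravectors :: 'n clif set)" by (simp add: paravectors_def)
      from le_po[OF this] have "po_norm p \<sigma> f \<ge> 0" by (rule order_trans[rotated]) simp
      then obtain M where M: "po_norm p \<sigma> f = ereal M" "M \<ge> 0"
        using fin by (cases "po_norm p \<sigma> f") auto
      have fb: "norm (f y) \<le> M * exp (\<sigma> * norm y powr p (norm y))" if "y \<in> paravectors" for y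
      proof -
        have "norm (f y) * exp (- \<sigma> * norm y powr p (norm y)) \<le> M" using le_po[OF that] M by simp
        hence "norm (f y) * exp (- \<sigma> * norm y powr p (norm y)) * exp (\<sigma> * norm y powr p (norm y))
            \<le> M * exp (\<sigma> * norm y powr p (norm y))" by (intro mult_right_mono) auto
        thus ?thesis by (simp add: exp_minus field_simps)
      qed
      obtain H :: "'n set \<Rightarrow> complex \<Rightarrow> complex" where hol: "\<And>A. H A holomorphic_on UNIV"
        and it: "\<And>l u v j. j \<in> cl_sphere \<Longrightarrow> (pd0 ^^ l) f (u *\<^sub>R cl_one + v *\<^sub>R j) =
          (\<chi> A. Re ((deriv ^^ l) (H A) (Complex u v))) + j \<odot> (\<chi> A. Im ((deriv ^^ l) (H A) (Complex u v)))"
        and hb: "\<And>u v A. cmod (H A (Complex u v)) \<le> norm (f (u *\<^sub>R cl_one + v *\<^sub>R axis {undefined} 1))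
            + norm (f (u *\<^sub>R cl_one + (- v) *\<^sub>R axis {undefined} 1))"
        using slice_iter[OF sm, of undefined] by blast
      define X where "X = C0 * (2 * k * \<sigma>) powr (real l / \<rho>) / G_po p \<rho> l"
      have X: "X \<ge> 0" using C0 G_pos[OF npo, of l] by (simp add: X_def)
      have pt: "norm ((pd0 ^^ l) f x) * exp (- (k * \<sigma>) * norm x powr p (norm x)) \<le> N * M * fact l * X"
        if x: "x \<in> paravectors" for x
      proof -
        obtain u v j where j: "j \<in> cl_sphere" and xe: "x = u *\<^sub>R cl_one + v *\<^sub>R j"
          using para_decomp[OF x] by blast
        define z where "z = Complex u v"
        have nx: "norm x = cmod z" using para_norm[OF j] by (simp add: xe z_def)
        define R where "R = Rs l"
        have R: "R > 0" using Rs by (simp add: R_def)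
        define B where "B = 2 * M * exp (\<sigma> * (cmod z + R) powr p (cmod z + R))"
        have cauchy: "cmod ((deriv ^^ l) (H A) z) \<le> fact l * B / R ^ l" for A
        proof (rule Cauchy_inequality)
          show "H A holomorphic_on ball z R" using hol by (rule holomorphic_on_subset) auto
          show "continuous_on (cball z R) (H A)"
            using holomorphic_on_imp_continuous_on[OF hol] by (rule continuous_on_subset) auto
          show "0 < R" by (rule R)
        next
          fix w assume w: "cmod (z - w) = R"
          have cw: "cmod w \<le> cmod z + R"
            using norm_triangle_ineq4[of z "z - w"] w by simp
          have e: "(axis {undefined} 1 :: 'n clif) \<in> cl_sphere" by (rule gen_sphere)
          have bnd1: "norm (f (Re w *\<^sub>R cl_one + s *\<^sub>R axis {undefined} 1)) \<le> M * exp (\<sigma> * (cmod z + R) powr p (cmod z + R))"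
            if s: "\<bar>s\<bar> = \<bar>Im w\<bar>" for s
          proof -
            have nn: "norm (Re w *\<^sub>R cl_one + s *\<^sub>R (axis {undefined} 1 :: 'n clif)) = cmod w"
              using para_norm[OF e, of "Re w" s] s by (simp add: cmod_def) (metis power2_abs)
            have "norm (f (Re w *\<^sub>R cl_one + s *\<^sub>R axis {undefined} 1))
                \<le> M * exp (\<sigma> * cmod w powr p (cmod w))"
              using fb[OF para_in[OF e, of "Re w" s]] nn by simp
            also have "\<dots> \<le> M * exp (\<sigma> * (cmod z + R) powr p (cmod z + R))"
              using M(2) \<sigma> V_mono[OF npo _ cw] by (intro mult_left_mono) auto
            finally show ?thesis .
          qed
          have "cmod (H A w) = cmod (H A (Complex (Re w) (Im w)))" by simp
          also have "\<dots> \<le> norm (f (Re w *\<^sub>R cl_one + Im w *\<^sub>R axis {undefined} 1))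
            + norm (f (Re w *\<^sub>R cl_one + (- Im w) *\<^sub>R axis {undefined} 1))" by (rule hb)
          also have "\<dots> \<le> B" using bnd1[of "Im w"] bnd1[of "- Im w"] by (simp add: B_def)
          finally show "cmod (H A w) \<le> B" .
        qed
        define F0 :: "'n clif" where "F0 = (\<chi> A. Re ((deriv ^^ l) (H A) z))"
        define F1 :: "'n clif" where "F1 = (\<chi> A. Im ((deriv ^^ l) (H A) z))"
        have F0: "norm F0 \<le> (\<Sum>A\<in>UNIV. cmod ((deriv ^^ l) (H A) z))"
          using norm_le_l1_cart[of F0] abs_Re_le_cmod by (simp add: F0_def) (meson order_trans sum_mono)
        have F1: "norm F1 \<le> (\<Sum>A\<in>UNIV. cmod ((deriv ^^ l) (H A) z))"
          using norm_le_l1_cart[of F1] abs_Im_le_cmod by (simp add: F1_def) (meson order_trans sum_mono)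
        have S: "(\<Sum>A\<in>UNIV. cmod ((deriv ^^ l) (H A) z)) \<le> real (card (UNIV :: 'n set set)) * (fact l * B / R ^ l)"
          using sum_bounded_above[of UNIV "\<lambda>A. cmod ((deriv ^^ l) (H A) z)" "fact l * B / R ^ l"] cauchy by simp
        have "norm ((pd0 ^^ l) f x) = norm (F0 + j \<odot> F1)" using it[OF j] by (simp add: xe F0_def F1_def z_def)
        also have "\<dots> \<le> norm F0 + norm F1 * K"
          using norm_triangle_ineq[of F0 "j \<odot> F1"] K(2)[of j F1] sphere_norm[OF j] by simp
        also have "\<dots> \<le> (1 + K) * (\<Sum>A\<in>UNIV. cmod ((deriv ^^ l) (H A) z))"
        proof -
          have "K * norm F1 \<le> K * (\<Sum>A\<in>UNIV. cmod ((deriv ^^ l) (H A) z))"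
            by (rule mult_left_mono[OF F1]) (use K in simp)
          then show ?thesis using F0 by (simp add: algebra_simps)
        qed
        also have "\<dots> \<le> (1 + K) * (real (card (UNIV :: 'n set set)) * (fact l * B / R ^ l))"
          using S K(1) by (intro mult_left_mono) auto
        also have "\<dots> = N * M * fact l * (exp (\<sigma> * (norm x + R) powr p (norm x + R)) / R ^ l)"
          by (simp add: N_def B_def nx)
        finally have np: "norm ((pd0 ^^ l) f x) \<le> N * M * fact l * (exp (\<sigma> * (norm x + R) powr p (norm x + R)) / R ^ l)" .
        have "norm ((pd0 ^^ l) f x) * exp (- (k * \<sigma>) * norm x powr p (norm x))
            \<le> N * M * fact l * (exp (\<sigma> * (norm x + R) powr p (norm x + R)) / R ^ l) * exp (- (k * \<sigma>) * norm x powr p (norm x))"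
          using np by (intro mult_right_mono) auto
        also have "\<dots> = N * M * fact l * (exp (\<sigma> * (norm x + R) powr p (norm x + R)) * exp (- (k * \<sigma>) * norm x powr p (norm x)) / R ^ l)"
          by simp
        also have "\<dots> \<le> N * M * fact l * X"
          using bnd[of "norm x" l] N M(2) unfolding X_def R_def by (intro mult_left_mono) auto
        finally show ?thesis .
      qed
      have "po_norm p (k * \<sigma>) ((pd0 ^^ l) f) \<le> ereal (N * M * fact l * X)"
        unfolding po_norm_def using pt by (intro SUP_least) simp
      hence "ereal (1 / fact l) * po_norm p (k * \<sigma>) ((pd0 ^^ l) f) \<le> ereal (1 / fact l) * ereal (N * M * fact l * X)"
        by (rule ereal_mult_left_mono) simp
      also have "\<dots> = ereal (N * C0 * (2 * k * \<sigma>) powr (real l / \<rho>) / G_po p \<rho> l) * po_norm p \<sigma> f"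
        by (simp add: M X_def)
      finally show "ereal (1 / fact l) * po_norm p (k * \<sigma>) ((pd0 ^^ l) f)
          \<le> ereal (N * C0 * (2 * k * \<sigma>) powr (real l / \<rho>) / G_po p \<rho> l) * po_norm p \<sigma> f" .
    qed
  qed
qed


end
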